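(* The morphism $\mathrm{B\acute{e}z}_2\times\phi_2:\mathcal{F}_2\to\mathcal{S}_2\times\mathbf{A}^1$ is a $\mathbf{G}_a$-equivariant isomorphism of schemes.
   Context: Let $k$ be a field; all schemes are over $k$. For a $k$-algebra $R$, $\mathcal{F}_2(R)$ is the set of pairs $(A,B)$ of polynomials in $R[X]$, $A$ monic of degree $2$, $\deg B<2$, $\mathrm{res}_{2,2}(A,B)\in R^\times$. $\mathcal{S}_2(R)$ is the set of symmetric $2\times2$ matrices over $R$ with invertible determinant. Bézout form: writing $\frac{A(X)B(Y)-A(Y)B(X)}{X-Y}=\sum_{1\le p,q\le 2}c_{p,q}X^{p-1}Y^{q-1}$, $\mathrm{B\acute{e}z}_2(A,B)=[c_{p,q}]$. $\phi_2(A,B)$ is the opposite of the coefficient of $X$ in $V_1$, where $(U_1,V_1)$ is the unique pair with $\deg U_1=1$, $\deg V_1\le1$, $AU_1+BV_1=X^3$. $\mathbf{G}_a$ acts on $\mathcal{F}_2$ by $h\cdot\frac{A}{B}=\frac{A+hB}{B}$, trivially on $\mathcal{S}_2$, and by translation on $\mathbf{A}^1$. *)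

theory Defs
  imports "Subresultants.Resultant_Prelim"
begin

definition res_mn :: "nat \<Rightarrow> nat \<Rightarrow> 'a::comm_ring_1 poly \<Rightarrow> 'a poly \<Rightarrow> 'a" where
  "res_mn m n A B = det (sylvester_mat_sub m n A B)"

definition invertible_elt :: "'a::comm_ring_1 \<Rightarrow> bool" where
  "invertible_elt x \<longleftrightarrow> (\<exists>y. x * y = 1)"

text \<open>R-points of F_2: A monic of degree 2, deg B < 2, res_{2,2}(A,B) a unit.\<close>
definition F2 :: "('a::comm_ring_1 poly \<times> 'a poly) set" where
  "F2 = {(A, B). degree A = 2 \<and> lead_coeff A = 1 \<and> degree B < 2 \<and> invertible_elt (res_mn 2 2 A B)}"

text \<open>R-points of S_2: symmetric 2x2 matrices with invertible determinant.\<close>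
definition S2 :: "'a::comm_ring_1 mat set" where
  "S2 = {M. M \<in> carrier_mat 2 2 \<and> transpose_mat M = M \<and> invertible_elt (det M)}"

text \<open>Bivariate polynomials as ('a poly) poly: inner variable X, outer variable Y.\<close>
definition polyX :: "'a::comm_ring_1 poly \<Rightarrow> 'a poly poly" where
  "polyX P = [:P:]"

definition polyY :: "'a::comm_ring_1 poly \<Rightarrow> 'a poly poly" where
  "polyY P = map_poly (\<lambda>c. [:c:]) P"

definition bez_coeffs :: "nat \<Rightarrow> 'a::comm_ring_1 poly \<Rightarrow> 'a poly \<Rightarrow> nat \<Rightarrow> nat \<Rightarrow> 'a" where
  "bez_coeffs n A B = (THE c.
     (\<forall>p q. \<not> (1 \<le> p \<and> p \<le> n \<and> 1 \<le> q \<and> q \<le> n) \<longrightarrow> c p q = 0) \<and>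
     polyX A * polyY B - polyY A * polyX B =
       (polyX [:0, 1:] - polyY [:0, 1:]) *
       (\<Sum>p\<in>{1..n}. \<Sum>q\<in>{1..n}. polyX (monom (c p q) (p - 1)) * polyY (monom 1 (q - 1))))"

definition Bez :: "nat \<Rightarrow> 'a::comm_ring_1 poly \<Rightarrow> 'a poly \<Rightarrow> 'a mat" where
  "Bez n A B = mat n n (\<lambda>(i, j). bez_coeffs n A B (i + 1) (j + 1))"

definition phi2 :: "'a::comm_ring_1 poly \<Rightarrow> 'a poly \<Rightarrow> 'a" where
  "phi2 A B = (let (U1, V1) = (THE (U, V). degree U = 1 \<and> degree V \<le> 1 \<and>
                                   A * U + B * V = monom 1 3)
               in - coeff V1 1)"

definition Ga_act :: "'a::comm_ring_1 \<Rightarrow> 'a poly \<times> 'a poly \<Rightarrow> 'a poly \<times> 'a poly" where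
  "Ga_act h AB = (fst AB + smult h (snd AB), snd AB)"

end

theory Submission
  imports Defs
begin


lemma det_exp:
  assumes "(A :: 'a :: comm_ring_1 mat) \<in> carrier_mat (Suc n) (Suc n)"
  shows "det A = (\<Sum>j<Suc n. A $$ (0,j) * ((-1)^j * det (mat_delete A 0 j)))"
  using laplace_expansion_row[OF assms, of 0] by (simp add: cofactor_def)

lemma det1: assumes "(A :: 'a :: comm_ring_1 mat) \<in> carrier_mat 1 1"
  shows "det A = A $$ (0,0)"
proof -
  have "mat_delete A 0 0 \<in> carrier_mat 0 0" using mat_delete_carrier[OF assms] by simp
  then show ?thesis using det_exp[of A 0] assms by simp
qed

lemma det2: assumes "(A :: 'a :: comm_ring_1 mat) \<in> carrier_mat 2 2"
  shows "det A = A $$ (0,0) * A $$ (1,1) - A $$ (0,1) * A $$ (1,0)"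
proof -
  have c: "mat_delete A 0 j \<in> carrier_mat 1 1" for j using mat_delete_carrier[OF assms] by simp
  have A: "A \<in> carrier_mat (Suc 1) (Suc 1)" using assms by (simp add: numeral_2_eq_2)
  have e: "det A = A $$ (0,0) * det (mat_delete A 0 0) - A $$ (0,1) * det (mat_delete A 0 1)"
    unfolding det_exp[OF A] by (simp add: lessThan_Suc)
  have md: "mat_delete A 0 j $$ (0, 0) = A $$ (1, if 0 < j then 0 else 1)" for j
    using assms by (simp add: mat_delete_def)
  show ?thesis unfolding e det1[OF c] md by simp
qed

lemma det3: assumes "(A :: 'a :: comm_ring_1 mat) \<in> carrier_mat 3 3"
  shows "det A = A $$ (0,0) * (A $$ (1,1) * A $$ (2,2) - A $$ (1,2) * A $$ (2,1))
     - A $$ (0,1) * (A $$ (1,0) * A $$ (2,2) - A $$ (1,2) * A $$ (2,0))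
     + A $$ (0,2) * (A $$ (1,0) * A $$ (2,1) - A $$ (1,1) * A $$ (2,0))"
proof -
  have c: "mat_delete A 0 j \<in> carrier_mat 2 2" for j using mat_delete_carrier[OF assms] by simp
  have A: "A \<in> carrier_mat (Suc 2) (Suc 2)" using assms by simp
  have e: "det A = A $$ (0,0) * det (mat_delete A 0 0) - A $$ (0,1) * det (mat_delete A 0 1)
     + A $$ (0,2) * det (mat_delete A 0 2)"
    unfolding det_exp[OF A] by (simp add: lessThan_Suc numeral_eq_Suc)
  have md: "mat_delete A 0 j $$ (k, l) = A $$ (Suc k, if l < j then l else Suc l)" if "k < 2" "l < 2" for j k l
    using that assms by (simp add: mat_delete_def)
  show ?thesis unfolding e det2[OF c]
    by (simp add: md numeral_2_eq_2)
qed

lemma det4: assumes "(A :: 'a :: comm_ring_1 mat) \<in> carrier_mat 4 4"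
  shows "det A = A $$ (0,0) * det (mat_delete A 0 0) - A $$ (0,1) * det (mat_delete A 0 1)
     + A $$ (0,2) * det (mat_delete A 0 2) - A $$ (0,3) * det (mat_delete A 0 3)"
proof -
  have A: "A \<in> carrier_mat (Suc 3) (Suc 3)" using assms by simp
  show ?thesis unfolding det_exp[OF A]
    by (simp add: lessThan_Suc numeral_3_eq_3 numeral_2_eq_2)
qed

lemma poly_deg1: "degree (p::'a::zero poly) \<le> 1 \<Longrightarrow> p = [:coeff p 0, coeff p 1:]"
proof (rule poly_eqI)
  fix n assume d: "degree p \<le> 1"
  show "coeff p n = coeff [:coeff p 0, coeff p 1:] n"
  proof (cases n)
    case (Suc m) then show ?thesis using d by (cases m) (auto simp: coeff_eq_0)
  qed simp
qed

lemma poly_deg2: "degree (p::'a::zero poly) \<le> 2 \<Longrightarrow> p = [:coeff p 0, coeff p 1, coeff p 2:]"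
proof (rule poly_eqI)
  fix n :: nat assume d: "degree p \<le> 2"
  show "coeff p n = coeff [:coeff p 0, coeff p 1, coeff p 2:] n"
  proof (cases n)
    case (Suc m)
    show ?thesis
    proof (cases m)
      case (Suc m')
      show ?thesis
      proof (cases m')
        case 0 then show ?thesis using \<open>n = Suc m\<close> \<open>m = Suc m'\<close> by (simp add: numeral_2_eq_2)
      next
        case (Suc k)
        then have "coeff p n = 0" using d \<open>n = Suc m\<close> \<open>m = Suc m'\<close> by (intro coeff_eq_0) simp
        then show ?thesis using Suc \<open>n = Suc m\<close> \<open>m = Suc m'\<close> by simp
      qed
    qed (use \<open>n = Suc m\<close> in simp)
  qed simp
qed

lemma monom13: "monom (1::'a::comm_ring_1) 3 = [:0,0,0,1:]"
  by (simp add: monom_Suc numeral_3_eq_3 monom_0)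


lemma polyY_pCons: "polyY (pCons a p) = pCons [:a::'a::comm_ring_1:] (polyY p)"
  unfolding polyY_def by (rule poly_eqI) (simp add: coeff_map_poly coeff_pCons split: nat.splits)
lemma polyY_0: "polyY (0::'a::comm_ring_1 poly) = 0"
  unfolding polyY_def by simp
lemma polyY_m0: "polyY (monom (1::'a::comm_ring_1) 0) = 1"
  by (simp add: polyY_def monom_0 one_pCons)
lemma polyY_m1: "polyY (monom (1::'a::comm_ring_1) 1) = [:0, 1:]"
  by (simp add: monom_Suc monom_0 polyY_pCons polyY_0 one_pCons)
lemma sumform: "(\<Sum>p\<in>{1..2::nat}. \<Sum>q\<in>{1..2::nat}. polyX (monom (c p q) (p - 1)) * polyY (monom (1::'a::comm_ring_1) (q - 1)))
   = [: [:c 1 1, c 2 1:], [:c 1 2, c 2 2:] :]"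
proof -
  have e: "{1..2::nat} = {1,2}" by auto
  have "(\<Sum>p\<in>{1..2::nat}. \<Sum>q\<in>{1..2::nat}. polyX (monom (c p q) (p - 1)) * polyY (monom (1::'a::comm_ring_1) (q - 1)))
    = polyX (monom (c 1 1) 0) * polyY (monom 1 0) + polyX (monom (c 1 2) 0) * polyY (monom 1 1)
     + (polyX (monom (c 2 1) 1) * polyY (monom 1 0) + polyX (monom (c 2 2) 1) * polyY (monom 1 1))"
    unfolding e by simp
  also have "\<dots> = [: [:c 1 1, c 2 1:], [:c 1 2, c 2 2:] :]"
    unfolding polyY_m0 polyY_m1 by (simp add: polyX_def monom_Suc monom_0)
  finally show ?thesis .
qed

lemma res22: "res_mn 2 2 [:a0,a1,1:] [:b0,b1:] = (b0^2 - a1*b0*b1 + a0*b1^2 :: 'a::comm_ring_1)"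
proof -
  define S where "S = sylvester_mat_sub 2 2 [:a0,a1,1:] [:b0,b1:]"
  have S: "S \<in> carrier_mat 4 4" by (simp add: sylvester_mat_sub_def S_def)
  have c: "mat_delete S 0 j \<in> carrier_mat 3 3" for j using mat_delete_carrier[OF S] by simp
  have md: "mat_delete S 0 j $$ (k, l) = S $$ (Suc k, if l < j then l else Suc l)" if "k < 3" "l < 3" for j k l
    using that S by (simp add: mat_delete_def)
  have E: "S $$ (i, j) = (if i < 2 then if i \<le> j \<and> j - i \<le> 2 then coeff [:a0,a1,1:] (2 + i - j) else 0
     else if i - 2 \<le> j \<and> j \<le> i then coeff [:b0,b1:] (i-j) else 0)" if "i < 4" "j < 4" for i j
    using that by (simp add: S_def sylvester_mat_sub_def)
  have r: "res_mn 2 2 [:a0,a1,1:] [:b0,b1:] = det S" by (simp add: res_mn_def S_def)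
  show ?thesis unfolding r det4[OF S] det3[OF c] 
    apply (simp add: md)
    apply (simp add: E numeral_2_eq_2)
    done
qed


lemma XmY: "polyX [:0, 1:] - polyY [:0, 1::'a::comm_ring_1:] = [: [:0,1:], [:-1:] :]"
  by (simp add: polyX_def polyY_pCons polyY_0)

lemma bez_ident: "polyX [:a0,a1,1:] * polyY [:b0,b1:] - polyY [:a0,a1,1:] * polyX [:b0,b1::'a::comm_ring_1:]
  = [: [:0,1:], [:-1:] :] * [: [:a1*b0-a0*b1, b0:], [:b0, b1:] :]"
  by (simp add: polyX_def polyY_pCons polyY_0 algebra_simps)

lemma XY_cancel:
  fixes S T :: "'a::comm_ring_1 poly poly"
  assumes "[: [:0,1:], [:-1:] :] * S = [: [:0,1:], [:-1:] :] * T"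
  shows "S = T"
proof (rule ccontr)
  let ?P = "[: [:0,1:], [:-1::'a:] :]"
  define d where "d = S - T"
  assume "S \<noteq> T"
  then have d0: "d \<noteq> 0" by (simp add: d_def)
  have "?P * d = ?P * S - ?P * T" by (simp only: d_def right_diff_distrib)
  then have "?P * d = 0" using assms by simp
  then have "coeff (?P * d) (degree ?P + degree d) = 0" by simp
  then have "coeff ?P (degree ?P) * coeff d (degree d) = 0"
    by (simp only: coeff_mult_degree_sum)
  moreover have "coeff ?P (degree ?P) = [:-1:]" by simp
  ultimately have "lead_coeff d = 0" by simp
  then show False using d0 by simp
qed



definition c0 :: "'a::comm_ring_1 \<Rightarrow> 'a \<Rightarrow> 'a \<Rightarrow> 'a \<Rightarrow> nat \<Rightarrow> nat \<Rightarrow> 'a" where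
  "c0 a0 a1 b0 b1 = (\<lambda>p q. if p = 1 \<and> q = 1 then a1*b0 - a0*b1 else
     if p = 1 \<and> q = 2 then b0 else if p = 2 \<and> q = 1 then b0 else if p = 2 \<and> q = 2 then b1 else 0)"

lemma bez_coeffs_eq: "bez_coeffs 2 [:a0,a1,1:] [:b0,b1:] = c0 a0 a1 (b0::'a::comm_ring_1) b1"
  unfolding bez_coeffs_def
proof (rule the_equality)
  show "(\<forall>p q. \<not> (1 \<le> p \<and> p \<le> 2 \<and> 1 \<le> q \<and> q \<le> 2) \<longrightarrow> c0 a0 a1 b0 b1 p q = 0) \<and>
    polyX [:a0, a1, 1:] * polyY [:b0, b1:] - polyY [:a0, a1, 1:] * polyX [:b0, b1:] =
    (polyX [:0, 1:] - polyY [:0, 1:]) *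
    (\<Sum>p\<in>{1..2}. \<Sum>q\<in>{1..2}. polyX (monom (c0 a0 a1 b0 b1 p q) (p - 1)) * polyY (monom 1 (q - 1)))"
  proof
    show "\<forall>p q. \<not> (1 \<le> p \<and> p \<le> 2 \<and> 1 \<le> q \<and> q \<le> 2) \<longrightarrow> c0 a0 a1 b0 b1 p q = 0"
      by (auto simp: c0_def)
    have v: "c0 a0 a1 b0 b1 1 1 = a1*b0-a0*b1" "c0 a0 a1 b0 b1 1 2 = b0"
      "c0 a0 a1 b0 b1 2 1 = b0" "c0 a0 a1 b0 b1 2 2 = b1" by (simp_all add: c0_def)
    show "polyX [:a0, a1, 1:] * polyY [:b0, b1:] - polyY [:a0, a1, 1:] * polyX [:b0, b1:] =
    (polyX [:0, 1:] - polyY [:0, 1:]) *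
    (\<Sum>p\<in>{1..2}. \<Sum>q\<in>{1..2}. polyX (monom (c0 a0 a1 b0 b1 p q) (p - 1)) * polyY (monom 1 (q - 1)))"
      unfolding sumform XmY bez_ident v by (rule refl)
  qed
next
  fix c assume H: "(\<forall>p q. \<not> (1 \<le> p \<and> p \<le> 2 \<and> 1 \<le> q \<and> q \<le> 2) \<longrightarrow> c p q = 0) \<and>
    polyX [:a0, a1, 1:] * polyY [:b0, b1:] - polyY [:a0, a1, 1:] * polyX [:b0, b1:] =
    (polyX [:0, 1:] - polyY [:0, 1:]) *
    (\<Sum>p\<in>{1..2}. \<Sum>q\<in>{1..2}. polyX (monom (c p q) (p - 1)) * polyY (monom (1::'a) (q - 1)))"
  then have "[: [:0,1:], [:-1:] :] * [: [:a1*b0-a0*b1, b0:], [:b0, b1:] :] = [: [:0,1:], [:-1:] :] * [: [:c 1 1, c 2 1:], [:c 1 2, c 2 2:] :]"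
    unfolding sumform XmY bez_ident by (rule conjunct2)
  then have "[: [:a1*b0-a0*b1, b0:], [:b0, b1:] :] = [: [:c 1 1, c 2 1:], [:c 1 2, c 2 2:] :]"
    by (rule XY_cancel)
  then have E: "a1*b0-a0*b1 = c 1 1 \<and> b0 = c 2 1 \<and> b0 = c 1 2 \<and> b1 = c 2 2" unfolding pCons_eq_iff by blast
  then have e: "c 1 1 = a1*b0-a0*b1" "c 2 1 = b0" "c 1 2 = b0" "c 2 2 = b1" by metis+
  show "c = c0 a0 a1 b0 b1"
  proof (intro ext)
    fix p q
    show "c p q = c0 a0 a1 b0 b1 p q"
    proof (cases "1 \<le> p \<and> p \<le> 2 \<and> 1 \<le> q \<and> q \<le> 2")
      case True
      then have "p = 1 \<or> p = 2" "q = 1 \<or> q = 2" by auto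
      then show ?thesis using e by (auto simp: c0_def)
    next
      case False
      then show ?thesis using H by (auto simp: c0_def)
    qed
  qed
qed

lemma Bez_eq: "Bez 2 [:a0,a1,1:] [:b0,b1:] = mat 2 2 (\<lambda>(i,j). c0 a0 a1 (b0::'a::comm_ring_1) b1 (i+1) (j+1))"
  unfolding Bez_def bez_coeffs_eq ..

definition DD :: "'a::comm_ring_1 \<Rightarrow> 'a \<Rightarrow> 'a \<Rightarrow> 'a \<Rightarrow> 'a" where
  "DD a0 a1 b0 b1 = b1*(a1*b0 - a0*b1) - b0*b0"

lemma sol_unique:
  fixes a0 a1 b0 b1 y :: "'a::comm_ring_1"
  assumes y: "DD a0 a1 b0 b1 * y = 1"
    and U: "degree U = 1" and V: "degree V \<le> 1"
    and E: "[:a0,a1,1:] * U + [:b0,b1:] * V = monom 1 3"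
  shows "U = [: b0*(a1*b0-a0*b1)*y, 1 :] \<and> V = [: -a0*(a1*b0-a0*b1)*y, (a0*b0 - a1*a1*b0 + a0*a1*b1)*y :]"
proof -
  define p0 p1 q0 q1 where "p0 = coeff U 0" "p1 = coeff U 1" "q0 = coeff V 0" "q1 = coeff V 1"
  have Ue: "U = [:p0,p1:]" using poly_deg1[of U] U p0_p1_q0_q1_def by simp
  have Ve: "V = [:q0,q1:]" using poly_deg1[of V] V p0_p1_q0_q1_def by simp
  have "[:a0,a1,1:] * [:p0,p1:] + [:b0,b1:] * [:q0,q1:] = [:0,0,0,1:]"
    using E unfolding Ue Ve monom13 .
  then have "a0*p0 + b0*q0 = 0 \<and> a0*p1 + (a1*p0 + (b0*q1 + b1*q0)) = 0 \<and> p0 + (a1*p1 + b1*q1) = 0 \<and> p1 = 1"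
    by (auto simp: algebra_simps)
  then have h0: "a0*p0 + b0*q0 = 0" and h1: "a0*p1 + (a1*p0 + (b0*q1 + b1*q0)) = 0"
    and h2: "p0 + (a1*p1 + b1*q1) = 0" and e3: "p1 = 1" by auto
  have E3: "a0*p0 + b0*q0 = 0" by (fact h0)
  have E2: "a1*p0 + b1*q0 + b0*q1 = -a0" using h1 unfolding e3
    by (simp add: eq_neg_iff_add_eq_0 algebra_simps)
  have E1: "p0 + b1*q1 = -a1" using h2 unfolding e3
    by (simp add: eq_neg_iff_add_eq_0 algebra_simps)
  let ?D = "DD a0 a1 b0 b1"
  have k0: "?D*p0 = b0*(a1*b0-a0*b1)"
  proof -
    have "?D*p0 = -b0*b0*(p0 + b1*q1) + b0*b1*(a1*p0 + b1*q0 + b0*q1) - b1*b1*(a0*p0 + b0*q0)"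
      by (simp add: DD_def algebra_simps)
    also have "\<dots> = -b0*b0*(-a1) + b0*b1*(-a0) - b1*b1*0" unfolding E1 E2 E3 ..
    also have "\<dots> = b0*(a1*b0-a0*b1)" by (simp add: algebra_simps)
    finally show ?thesis .
  qed
  have k1: "?D*q0 = -a0*(a1*b0-a0*b1)"
  proof -
    have "?D*q0 = a0*b0*(p0 + b1*q1) - a0*b1*(a1*p0 + b1*q0 + b0*q1) + (a1*b1 - b0)*(a0*p0 + b0*q0)"
      by (simp add: DD_def algebra_simps)
    also have "\<dots> = a0*b0*(-a1) - a0*b1*(-a0) + (a1*b1 - b0)*0" unfolding E1 E2 E3 ..
    also have "\<dots> = -a0*(a1*b0-a0*b1)" by (simp add: algebra_simps)
    finally show ?thesis .
  qed
  have k2: "?D*q1 = a0*b0 - a1*a1*b0 + a0*a1*b1"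
  proof -
    have "?D*q1 = (a1*b0 - a0*b1)*(p0 + b1*q1) - b0*(a1*p0 + b1*q0 + b0*q1) + b1*(a0*p0 + b0*q0)"
      by (simp add: DD_def algebra_simps)
    also have "\<dots> = (a1*b0 - a0*b1)*(-a1) - b0*(-a0) + b1*0" unfolding E1 E2 E3 ..
    also have "\<dots> = a0*b0 - a1*a1*b0 + a0*a1*b1" by (simp add: algebra_simps)
    finally show ?thesis .
  qed
  have "p0 = (?D*p0)*y" "q0 = (?D*q0)*y" "q1 = (?D*q1)*y"
    by (metis y mult.commute mult.left_commute mult_1_right)+
  then show ?thesis using k0 k1 k2 e3 unfolding Ue Ve by simp
qed



lemma phi2_eq:
  fixes a0 a1 b0 b1 y :: "'a::comm_ring_1"
  assumes y: "DD a0 a1 b0 b1 * y = 1"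
  shows "phi2 [:a0,a1,1:] [:b0,b1:] = (a1*a1*b0 - a0*b0 - a0*a1*b1)*y"
proof -
  define m where "m = a1*b0-a0*b1"
  define U0 where "U0 = [: b0*m*y, 1::'a :]"
  define V0 where "V0 = [: -a0*m*y, (a0*b0 - a1*a1*b0 + a0*a1*b1)*y :]"
  let ?P = "\<lambda>(U, V). degree U = 1 \<and> degree V \<le> 1 \<and> [:a0,a1,1:] * U + [:b0,b1:] * V = monom (1::'a) 3"
  have D: "DD a0 a1 b0 b1 = b1*m - b0*b0" by (simp add: DD_def m_def)
  have pf: "[:a0,a1,1:] * [:u,1:] + [:b0,b1:] * [:v0,v1:] =
      [: a0*u + b0*v0, a0 + a1*u + b0*v1 + b1*v0, a1 + u + b1*v1, 1 :]" for u v0 v1 :: 'a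
    by (simp add: algebra_simps)
  have s1: "a1 + b0*m*y + b1*((a0*b0 - a1*a1*b0 + a0*a1*b1)*y) = a1 - a1 * (DD a0 a1 b0 b1 * y)"
    unfolding D m_def by (simp add: algebra_simps)
  have s2: "a0 + a1*(b0*m*y) + b0*((a0*b0 - a1*a1*b0 + a0*a1*b1)*y) + b1*(-a0*m*y) = a0 - a0 * (DD a0 a1 b0 b1 * y)"
    unfolding D m_def by (simp add: algebra_simps)
  have s3: "a0*(b0*m*y) + b0*(-a0*m*y) = 0" by (simp add: algebra_simps)
  have ex: "?P (U0, V0)"
  proof -
    have "[:a0,a1,1:] * U0 + [:b0,b1:] * V0 = [:0,0,0,1:]"
      unfolding U0_def V0_def pf s1 s2 s3 y by simp
    then have "[:a0,a1,1:] * U0 + [:b0,b1:] * V0 = monom 1 3" by (simp only: monom13)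
    moreover have "degree U0 = 1" by (simp add: U0_def)
    moreover have "degree V0 \<le> 1" by (simp add: V0_def)
    ultimately show ?thesis unfolding prod.case by blast
  qed
  have un: "x = (U0, V0)" if "?P x" for x
  proof (cases x)
    case (Pair U V)
    have "degree U = 1" "degree V \<le> 1" "[:a0,a1,1:] * U + [:b0,b1:] * V = monom 1 3"
      using that unfolding Pair by (simp_all only: prod.case)
    from sol_unique[OF y this] show ?thesis unfolding Pair U0_def V0_def m_def by simp
  qed
  have T: "(THE x. ?P x) = (U0, V0)" 
    apply (rule the_equality[where P="?P"])
     apply (rule ex)
    apply (erule un)
    done
  have "phi2 [:a0,a1,1:] [:b0,b1:] = - coeff V0 1" unfolding phi2_def Let_def T by simp
  also have "\<dots> = (a1*a1*b0 - a0*b0 - a0*a1*b1)*y" by (simp add: V0_def algebra_simps)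
  finally show ?thesis .
qed



lemma res_DD: "res_mn 2 2 [:a0,a1,1:] [:b0,b1:] = - DD a0 a1 (b0::'a::comm_ring_1) b1"
  unfolding res22 DD_def by (simp add: algebra_simps power2_eq_square)

lemma F2_char: "((A::'a::comm_ring_1 poly), B) \<in> F2 \<longleftrightarrow>
  (\<exists>a0 a1 b0 b1 y. A = [:a0,a1,1:] \<and> B = [:b0,b1:] \<and> DD a0 a1 b0 b1 * y = 1)"
proof
  assume H: "(A, B) \<in> F2"
  then have dA: "degree A = 2" and lA: "lead_coeff A = 1" and dB: "degree B < 2"
    and inv: "invertible_elt (res_mn 2 2 A B)" by (auto simp: F2_def)
  have Ae: "A = [:coeff A 0, coeff A 1, 1:]" using poly_deg2[of A] dA lA by simp
  have Be: "B = [:coeff B 0, coeff B 1:]" using poly_deg1[of B] dB by simp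
  obtain y where "res_mn 2 2 A B * y = 1" using inv by (auto simp: invertible_elt_def)
  then have "DD (coeff A 0) (coeff A 1) (coeff B 0) (coeff B 1) * (-y) = 1"
    using res_DD[of "coeff A 0" "coeff A 1" "coeff B 0" "coeff B 1"] Ae Be by (metis minus_mult_commute)
  then show "\<exists>a0 a1 b0 b1 y. A = [:a0,a1,1:] \<and> B = [:b0,b1:] \<and> DD a0 a1 b0 b1 * y = 1"
    using Ae Be by blast
next
  assume "\<exists>a0 a1 b0 b1 y. A = [:a0,a1,1:] \<and> B = [:b0,b1:] \<and> DD a0 a1 b0 b1 * y = 1"
  then obtain a0 a1 b0 b1 y where e: "A = [:a0,a1,1:]" "B = [:b0,b1:]" and y: "DD a0 a1 b0 b1 * y = 1"
    by blast
  have "res_mn 2 2 A B * (-y) = 1" using y unfolding e res_DD by simp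
  then have "invertible_elt (res_mn 2 2 A B)" unfolding invertible_elt_def by blast
  moreover have "degree B < 2" unfolding e by (simp add: less_Suc_eq_le degree_pCons_le)
  ultimately show "(A, B) \<in> F2" unfolding F2_def e by (simp add: numeral_2_eq_2)
qed

lemma c0_shift: "c0 (a0 + h*b0) (a1 + h*b1) b0 b1 = c0 a0 a1 b0 (b1::'a::comm_ring_1)"
proof -
  have e: "(a1 + h*b1)*b0 - (a0 + h*b0)*b1 = a1*b0 - a0*b1" by (simp add: algebra_simps)
  show ?thesis unfolding c0_def e by (rule refl)
qed

lemma DD_shift: "DD (a0 + h*b0) (a1 + h*b1) b0 b1 = DD a0 a1 b0 (b1::'a::comm_ring_1)"
  unfolding DD_def by (simp add: algebra_simps)

lemma phi2_shift:
  assumes y: "DD a0 a1 b0 b1 * y = 1"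
  shows "phi2 [:a0 + h*b0, a1 + h*b1, 1:] [:b0,b1:] = phi2 [:a0,a1,1:] [:b0,b1:] + (h::'a::comm_ring_1)"
proof -
  have y': "DD (a0 + h*b0) (a1 + h*b1) b0 b1 * y = 1" using y DD_shift by metis
  have "((a1 + h*b1)*(a1 + h*b1)*b0 - (a0 + h*b0)*b0 - (a0 + h*b0)*(a1 + h*b1)*b1)*y
     = (a1*a1*b0 - a0*b0 - a0*a1*b1)*y + h*(DD a0 a1 b0 b1 * y)"
    unfolding DD_def by (simp add: algebra_simps)
  then show ?thesis unfolding phi2_eq[OF y] phi2_eq[OF y'] y by simp
qed

lemma Ga_act_pt: "Ga_act h ([:a0,a1,1:], [:b0,b1:]) = ([:a0 + h*b0, a1 + h*b1, 1:], [:b0,b1::'a::comm_ring_1:])"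
  unfolding Ga_act_def by (simp add: algebra_simps)



lemma Bez_entries:
  "Bez 2 [:a0,a1,1:] [:b0,b1:] $$ (0,0) = a1*b0 - a0*b1"
  "Bez 2 [:a0,a1,1:] [:b0,b1:] $$ (0,1) = b0"
  "Bez 2 [:a0,a1,1:] [:b0,b1:] $$ (1,0) = b0"
  "Bez 2 [:a0,a1,1:] [:b0,b1:] $$ (1,1) = (b1::'a::comm_ring_1)"
  "Bez 2 [:a0,a1,1:] [:b0,b1:] \<in> carrier_mat 2 2"
  unfolding Bez_eq by (auto simp: c0_def)

lemma Bez_S2:
  assumes y: "DD a0 a1 b0 b1 * y = 1"
  shows "Bez 2 [:a0,a1,1:] [:b0,b1:] \<in> (S2::'a::comm_ring_1 mat set)"
proof -
  let ?M = "Bez 2 [:a0,a1,1:] [:b0,(b1::'a):]"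
  have C: "?M \<in> carrier_mat 2 2" by (rule Bez_entries(5))
  have "det ?M = DD a0 a1 b0 b1" unfolding det2[OF C] Bez_entries DD_def by (simp add: algebra_simps)
  then have "invertible_elt (det ?M)" using y unfolding invertible_elt_def by metis
  moreover have "transpose_mat ?M = ?M" unfolding Bez_eq
    by (rule eq_matI) (auto simp: c0_def less_Suc_eq numeral_2_eq_2)
  ultimately show ?thesis using C unfolding S2_def by simp
qed


lemma Phi_pt:
  assumes y: "DD a0 a1 b0 b1 * y = 1"
  shows "(\<lambda>(A, B). (Bez 2 A B, phi2 A B)) ([:a0,a1,1:], [:b0,b1:]) =
     (Bez 2 [:a0,a1,1:] [:b0,b1:], phi2 [:a0,a1,1:] [:b0,(b1::'a::comm_ring_1):])"
  by simp

theorem main_equiv: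
  "\<forall>h. \<forall>(A, B) \<in> (F2 :: ('r::comm_ring_1 poly \<times> 'r poly) set).
          (\<lambda>(A', B'). (Bez 2 A' B', phi2 A' B')) (Ga_act h (A, B)) = (Bez 2 A B, phi2 A B + h)"
proof (intro allI ballI)
  fix h :: 'r and AB assume "AB \<in> (F2 :: ('r poly \<times> 'r poly) set)"
  then obtain A B where AB: "AB = (A, B)" "(A, B) \<in> F2" by (cases AB) auto
  then obtain a0 a1 b0 b1 y where e: "A = [:a0,a1,1:]" "B = [:b0,b1:]" and y: "DD a0 a1 b0 b1 * y = 1"
    unfolding F2_char by blast
  show "case AB of (A, B) \<Rightarrow> (\<lambda>(A', B'). (Bez 2 A' B', phi2 A' B')) (Ga_act h (A, B)) = (Bez 2 A B, phi2 A B + h)"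
    unfolding AB e using phi2_shift[OF y, of h] by (simp add: Ga_act_pt Bez_eq c0_shift)
qed



lemma Phi_inj: "inj_on (\<lambda>(A, B). (Bez 2 A B, phi2 A B)) (F2 :: ('r::comm_ring_1 poly \<times> 'r poly) set)"
proof (rule inj_onI)
  fix X X' :: "'r poly \<times> 'r poly"
  assume X: "X \<in> F2" and X': "X' \<in> F2"
    and eq: "(\<lambda>(A, B). (Bez 2 A B, phi2 A B)) X = (\<lambda>(A, B). (Bez 2 A B, phi2 A B)) X'"
  obtain a0 a1 b0 b1 y where Xe: "X = ([:a0,a1,1:], [:b0,b1:])" and y: "DD a0 a1 b0 b1 * y = 1"
    using X by (cases X) (auto simp: F2_char)
  obtain a0' a1' b0' b1' y' where Xe': "X' = ([:a0',a1',1:], [:b0',b1':])" and y': "DD a0' a1' b0' b1' * y' = 1"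
    using X' by (cases X') (auto simp: F2_char)
  have BE: "Bez 2 [:a0,a1,1:] [:b0,b1:] = Bez 2 [:a0',a1',1:] [:b0',b1':]"
    and PE: "phi2 [:a0,a1,1:] [:b0,b1:] = phi2 [:a0',a1',1:] [:b0',b1':]"
    using eq unfolding Xe Xe' by simp_all
  have "Bez 2 [:a0,a1,1:] [:b0,b1:] $$ (0,1) = Bez 2 [:a0',a1',1:] [:b0',b1':] $$ (0,1)"
    "Bez 2 [:a0,a1,1:] [:b0,b1:] $$ (1,1) = Bez 2 [:a0',a1',1:] [:b0',b1':] $$ (1,1)"
    "Bez 2 [:a0,a1,1:] [:b0,b1:] $$ (0,0) = Bez 2 [:a0',a1',1:] [:b0',b1':] $$ (0,0)"
    using BE by simp_all
  then have b0: "b0' = b0" and b1: "b1' = b1" and mm: "a1'*b0 - a0'*b1 = a1*b0 - a0*b1"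
    unfolding Bez_entries by simp_all
  define m where "m = a1*b0 - a0*b1"
  define d0 where "d0 = a0' - a0"
  define d1 where "d1 = a1' - a1"
  define h where "h = (-b0*y)*d0 + (m*y)*d1"
  have dd: "d1*b0 = d0*b1" using mm unfolding d0_def d1_def by (simp add: algebra_simps)
  have hb1: "h*b1 = d1*(DD a0 a1 b0 b1 * y) - b0*y*(d0*b1 - d1*b0)"
    unfolding h_def DD_def m_def by (simp add: algebra_simps)
  have hb0: "h*b0 = d0*(DD a0 a1 b0 b1 * y) - m*y*(d0*b1 - d1*b0)"
    unfolding h_def DD_def m_def by (simp add: algebra_simps)
  have a1': "a1' = a1 + h*b1" using hb1 dd y unfolding d1_def by simp
  have a0': "a0' = a0 + h*b0" using hb0 dd y unfolding d0_def by simp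
  have "phi2 [:a0',a1',1:] [:b0',b1':] = phi2 [:a0,a1,1:] [:b0,b1:] + h"
    unfolding a1' a0' b0 b1 by (rule phi2_shift[OF y])
  then have "h = 0" using PE by simp
  then show "X = X'" unfolding Xe Xe' a1' a0' b0 b1 by simp
qed


lemma Phi_image: "(\<lambda>(A, B). (Bez 2 A B, phi2 A B)) ` (F2 :: ('r::comm_ring_1 poly \<times> 'r poly) set) = S2 \<times> UNIV"
proof
  show "(\<lambda>(A, B). (Bez 2 A B, phi2 A B)) ` (F2 :: ('r poly \<times> 'r poly) set) \<subseteq> S2 \<times> UNIV"
  proof
    fix Z assume "Z \<in> (\<lambda>(A, B). (Bez 2 A B, phi2 A B)) ` (F2 :: ('r poly \<times> 'r poly) set)"
    then obtain X where X: "X \<in> F2" and Z: "Z = (\<lambda>(A, B). (Bez 2 A B, phi2 A B)) X" by blast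
    obtain a0 a1 b0 b1 y where Xe: "X = ([:a0,a1,1:], [:b0,b1:])" and y: "DD a0 a1 b0 b1 * y = 1"
      using X by (cases X) (auto simp: F2_char)
    show "Z \<in> S2 \<times> UNIV" unfolding Z Xe using Bez_S2[OF y] by simp
  qed
next
  show "S2 \<times> UNIV \<subseteq> (\<lambda>(A, B). (Bez 2 A B, phi2 A B)) ` (F2 :: ('r poly \<times> 'r poly) set)"
  proof
    fix Z :: "'r mat \<times> 'r" assume "Z \<in> S2 \<times> UNIV"
    then obtain M t where Z: "Z = (M, t)" and M: "M \<in> S2" by (cases Z) auto
    have C: "M \<in> carrier_mat 2 2" and T: "transpose_mat M = M" and I: "invertible_elt (det M)"
      using M by (auto simp: S2_def)
    define m where "m = M $$ (0,0)"
    define b0 where "b0 = M $$ (0,1)"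
    define b1 where "b1 = M $$ (1,1)"
    have M10: "M $$ (1,0) = b0"
    proof -
      have "transpose_mat M $$ (0,1) = M $$ (1,0)" using C by simp
      then show ?thesis unfolding T b0_def by simp
    qed
    obtain y where y0: "det M * y = 1" using I by (auto simp: invertible_elt_def)
    have dM: "det M = m*b1 - b0*b0" unfolding det2[OF C] M10 unfolding m_def b0_def b1_def by simp
    define a1 where "a1 = -m*b0*y"
    define a0 where "a0 = -m*m*y"
    have mm: "a1*b0 - a0*b1 = m"
    proof -
      have "a1*b0 - a0*b1 = m*(det M * y)" unfolding a1_def a0_def dM by (simp add: algebra_simps)
      then show ?thesis using y0 by simp
    qed
    have y: "DD a0 a1 b0 b1 * y = 1" unfolding DD_def mm using y0 dM by (simp add: algebra_simps)
    define h where "h = t - phi2 [:a0,a1,1:] [:b0,b1:]"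
    define A where "A = [:a0 + h*b0, a1 + h*b1, 1:]"
    define B where "B = [:b0, b1:]"
    have yA: "DD (a0 + h*b0) (a1 + h*b1) b0 b1 * y = 1" using y DD_shift by metis
    have inF: "(A, B) \<in> F2" unfolding F2_char A_def B_def using yA by blast
    have "phi2 A B = t" unfolding A_def B_def phi2_shift[OF y] h_def by simp
    moreover have "Bez 2 A B = M"
    proof (rule eq_matI)
      fix i j assume "i < dim_row M" "j < dim_col M"
      then have "i < 2" "j < 2" using C by auto
      then have "i = 0 \<or> i = 1" "j = 0 \<or> j = 1" by auto
      then show "Bez 2 A B $$ (i, j) = M $$ (i, j)"
        unfolding A_def B_def Bez_eq c0_shift using mm M10
        by (auto simp: c0_def m_def b0_def b1_def)
    qed (use C in \<open>auto simp: A_def B_def Bez_eq\<close>)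
    ultimately show "Z \<in> (\<lambda>(A, B). (Bez 2 A B, phi2 A B)) ` (F2 :: ('r poly \<times> 'r poly) set)"
      unfolding Z using inF by (auto intro!: image_eqI[where x = "(A, B)"])
  qed
qed


theorem proposition3p19:
  fixes \<iota> :: "'k::field \<Rightarrow> 'r::comm_ring_1"
  assumes "\<iota> 1 = 1"
    and "\<And>x y. \<iota> (x + y) = \<iota> x + \<iota> y"
    and "\<And>x y. \<iota> (x * y) = \<iota> x * \<iota> y"
  shows "bij_betw (\<lambda>(A, B). (Bez 2 A B, phi2 A B)) (F2 :: ('r poly \<times> 'r poly) set) (S2 \<times> UNIV)
    \<and> (\<forall>h. \<forall>(A, B) \<in> (F2 :: ('r poly \<times> 'r poly) set).
          (\<lambda>(A', B'). (Bez 2 A' B', phi2 A' B')) (Ga_act h (A, B)) = (Bez 2 A B, phi2 A B + h))"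
  using Phi_inj Phi_image main_equiv unfolding bij_betw_def by blast

end
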